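(* Let $\|\cdot\|$ be a norm on $\mathbb{R}^n$ such that its dual norm $\|\cdot\|^*$ is an algebra norm. Then $\|f\|\ge|\mathbb{E}_xf(x)|$ and $\|f\|^*\ge\|f\|_\infty$ for every $f\in\mathbb{R}^n$.
   Context: Functions in $\mathbb{R}^n$ are functions on $\{1,\dots,n\}$; $\mathbb{E}_x$ denotes $\frac1n\sum_x$, $\langle f,g\rangle=\mathbb{E}_xf(x)g(x)$, $\|f\|_\infty=\max_x|f(x)|$. The dual norm is $\|\phi\|^*=\max\{\langle f,\phi\rangle:\|f\|\le1\}$. An algebra norm is a norm $N$ on $\mathbb{R}^n$ with $N(fg)\le N(f)N(g)$ for all $f,g$ (pointwise product) and $N(\mathbf 1)=1$ for the constant function $\mathbf 1$. *)

theory Defs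
  imports "HOL-Analysis.Analysis"
begin

text \<open>Functions in R^n are functions on a finite index type 'n (with CARD('n) = n).\<close>

definition expect :: "('n::finite \<Rightarrow> real) \<Rightarrow> real" where
  "expect f = (\<Sum>x\<in>UNIV. f x) / real CARD('n)"

definition ip :: "('n::finite \<Rightarrow> real) \<Rightarrow> ('n \<Rightarrow> real) \<Rightarrow> real" where
  "ip f g = expect (\<lambda>x. f x * g x)"

definition sup_norm :: "('n::finite \<Rightarrow> real) \<Rightarrow> real" where
  "sup_norm f = Max (range (\<lambda>x. \<bar>f x\<bar>))"

definition is_norm :: "(('n::finite \<Rightarrow> real) \<Rightarrow> real) \<Rightarrow> bool" where
  "is_norm N \<longleftrightarrow>
     (\<forall>f. N f \<ge> 0) \<and> (\<forall>f. N f = 0 \<longleftrightarrow> f = (\<lambda>_. 0)) \<and>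
     (\<forall>c f. N (\<lambda>x. c * f x) = \<bar>c\<bar> * N f) \<and>
     (\<forall>f g. N (\<lambda>x. f x + g x) \<le> N f + N g)"

definition dual_norm :: "(('n::finite \<Rightarrow> real) \<Rightarrow> real) \<Rightarrow> ('n \<Rightarrow> real) \<Rightarrow> real" where
  "dual_norm N \<phi> = Sup {ip f \<phi> | f. N f \<le> 1}"

definition is_algebra_norm :: "(('n::finite \<Rightarrow> real) \<Rightarrow> real) \<Rightarrow> bool" where
  "is_algebra_norm N \<longleftrightarrow> is_norm N \<and>
     (\<forall>f g. N (\<lambda>x. f x * g x) \<le> N f * N g) \<and> N (\<lambda>_. 1) = 1"

end

theory Submission
  imports Defs
begin

lemma norm_neg: assumes "is_norm N" shows "N (\<lambda>x. - f x) = N f"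
proof -
  have "N (\<lambda>x. (-1) * f x) = \<bar>-1\<bar> * N f" using assms unfolding is_norm_def by blast
  thus ?thesis by simp
qed

lemma norm_zero: assumes "is_norm N" shows "N (\<lambda>_. 0) = 0"
  using assms unfolding is_norm_def by blast

lemma norm_sum: assumes "is_norm N" and "finite S"
  shows "N (\<lambda>y. \<Sum>x\<in>S. g x y) \<le> (\<Sum>x\<in>S. N (g x))"
  using assms(2)
proof (induction S rule: finite_induct)
  case empty then show ?case using norm_zero[OF assms(1)] by simp
next
  case (insert a S)
  have "N (\<lambda>y. \<Sum>x\<in>insert a S. g x y) = N (\<lambda>y. g a y + (\<Sum>x\<in>S. g x y))"
    using insert by simp
  also have "\<dots> \<le> N (g a) + N (\<lambda>y. \<Sum>x\<in>S. g x y)"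
    using assms(1) unfolding is_norm_def by (metis (no_types))
  finally show ?case using insert by simp
qed

definition delta :: "'n \<Rightarrow> 'n \<Rightarrow> real" where "delta a = (\<lambda>y. if y = a then 1 else 0)"

lemma norm_upper: assumes "is_norm N"
  shows "N (f::'n::finite \<Rightarrow> real) \<le> (\<Sum>x\<in>UNIV. \<bar>f x\<bar> * N (delta x))"
proof -
  have f: "f = (\<lambda>y. \<Sum>x\<in>UNIV. f x * delta x y)"
    by (auto simp: delta_def if_distrib cong: if_cong)
  have "N f = N (\<lambda>y. \<Sum>x\<in>UNIV. f x * delta x y)" using f by simp
  also have "\<dots> \<le> (\<Sum>x\<in>UNIV. N (\<lambda>y. f x * delta x y))"
    by (rule norm_sum[OF assms]) simp
  also have "\<dots> = (\<Sum>x\<in>UNIV. \<bar>f x\<bar> * N (delta x))"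
    using assms unfolding is_norm_def by (metis (no_types))
  finally show ?thesis .
qed

lemma norm_tri: assumes "is_norm N" shows "N (\<lambda>x. f x + g x) \<le> N f + N g"
  using assms unfolding is_norm_def by blast

lemma norm_diff: assumes "is_norm N"
  shows "N f - N g \<le> N (\<lambda>x. f x - g x)"
proof -
  have "N f = N (\<lambda>x. (f x - g x) + g x)" by simp
  also have "\<dots> \<le> N (\<lambda>x. f x - g x) + N g" using norm_tri[OF assms, of "\<lambda>x. f x - g x" g] by simp
  finally show ?thesis by simp
qed

lemma norm_lower: assumes "is_norm N"
  shows "\<exists>m>0. \<forall>v::real^'n::finite. m * norm v \<le> N (\<lambda>i. v $ i)"
proof -
  define M where "M = (\<lambda>v::real^'n. N (\<lambda>i. v $ i))"
  define C where "C = (\<Sum>x\<in>UNIV. N (delta x :: 'n \<Rightarrow> real))"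
  have C0: "C \<ge> 0" unfolding C_def using assms unfolding is_norm_def by (simp add: sum_nonneg)
  have Mle: "M v \<le> C * norm v" for v
  proof -
    have "M v \<le> (\<Sum>x\<in>UNIV. \<bar>v $ x\<bar> * N (delta x))" unfolding M_def by (rule norm_upper[OF assms])
    also have "\<dots> \<le> (\<Sum>x\<in>UNIV. norm v * N (delta x))"
      apply (rule sum_mono) apply (rule mult_right_mono)
      using component_le_norm_cart[of v] assms unfolding is_norm_def by auto
    finally show ?thesis unfolding C_def by (simp add: sum_distrib_left mult.commute)
  qed
  have vm: "(\<lambda>x. v$x - w$x) = vec_nth (v - w)" for v w :: "real^'n" by auto
  have lip: "\<bar>M v - M w\<bar> \<le> C * norm (v - w)" for v w
  proof -
    have "M v - M w \<le> M (v - w)" unfolding M_def using norm_diff[OF assms, of "\<lambda>i. v$i" "\<lambda>i. w$i"] vm by simp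
    moreover have "M w - M v \<le> M (w - v)" unfolding M_def using norm_diff[OF assms, of "\<lambda>i. w$i" "\<lambda>i. v$i"] vm by simp
    moreover have "M (w - v) = M (v - w)" unfolding M_def
      using norm_neg[OF assms, of "\<lambda>i. (v - w) $ i"] vm[of w v] vm[of v w] by simp
    ultimately show ?thesis using Mle[of "v - w"] by linarith
  qed
  have cont: "continuous_on UNIV M"
  proof (rule continuous_at_imp_continuous_on, intro ballI)
    fix x :: "real^'n"
    show "isCont M x"
    proof (rule continuous_at_eps_delta[THEN iffD2], intro allI impI)
      fix e :: real assume e: "e > 0"
      show "\<exists>d>0. \<forall>y. dist y x < d \<longrightarrow> dist (M y) (M x) < e"
      proof (intro exI[of _ "e / (C + 1)"] conjI allI impI)
        show "e / (C + 1) > 0" using e C0 by simp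
        fix y assume "dist y x < e / (C + 1)"
        hence "(C+1) * norm (y - x) < e" using C0 by (simp add: dist_norm field_simps)
        moreover have "C * norm (y - x) \<le> (C+1) * norm (y - x)" by (simp add: distrib_right)
        ultimately show "dist (M y) (M x) < e" using lip[of y x] by (simp add: dist_real_def)
      qed
    qed
  qed
  obtain a :: 'n where True by blast
  have ne: "sphere (0::real^'n) 1 \<noteq> {}"
    using norm_axis_1[of a] by (metis mem_sphere_0 empty_iff)
  obtain v0 where v0: "v0 \<in> sphere 0 1" and mn: "\<forall>y\<in>sphere 0 1. M v0 \<le> M y"
    using continuous_attains_inf[OF compact_sphere ne continuous_on_subset[OF cont]] by blast
  have "v0 \<noteq> 0" using v0 by auto
  hence "(\<lambda>i. v0 $ i) \<noteq> (\<lambda>_. 0)" by (metis vec_eq_iff zero_index)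
  hence m0: "M v0 > 0" unfolding M_def using assms unfolding is_norm_def
    by (metis order_le_less)
  show ?thesis
  proof (intro exI[of _ "M v0"] conjI allI m0)
    fix v :: "real^'n"
    show "M v0 * norm v \<le> N (\<lambda>i. v $ i)"
    proof (cases "v = 0")
      case True then show ?thesis using norm_zero[OF assms] by simp
    next
      case False
      hence nv: "norm v > 0" by simp
      have "M v0 \<le> M (v /\<^sub>R norm v)" using mn False by simp
      also have "M (v /\<^sub>R norm v) = M v / norm v"
      proof -
        have "M (v /\<^sub>R norm v) = N (\<lambda>i. (1 / norm v) * v $ i)" unfolding M_def
          by (rule arg_cong[where f=N]) (auto simp: divide_inverse mult.commute)
        also have "\<dots> = \<bar>1 / norm v\<bar> * M v" unfolding M_def using assms unfolding is_norm_def by blast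
        finally show ?thesis using nv by simp
      qed
      finally show ?thesis using nv unfolding M_def by (simp add: field_simps)
    qed
  qed
qed

lemma bdd: assumes "is_norm N"
  shows "bdd_above {ip f \<phi> | f::'n::finite \<Rightarrow> real. N f \<le> 1}"
proof -
  obtain m where m: "m > 0" "\<forall>v::real^'n. m * norm v \<le> N (\<lambda>i. v $ i)"
    using norm_lower[OF assms] by blast
  define B where "B = norm (\<chi> i. \<phi> i) / m"
  show ?thesis
  proof (rule bdd_aboveI[of _ B], clarify)
    fix f :: "'n \<Rightarrow> real" assume Nf: "N f \<le> 1"
    have inn: "(\<Sum>x\<in>UNIV. f x * \<phi> x) = inner (\<chi> i. f i) (\<chi> i. \<phi> i)"
      by (simp add: inner_vec_def)
    have vl: "(\<lambda>i. (\<chi> i. f i) $ i) = f" by simp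
    have "m * norm (\<chi> i. f i) \<le> N f" using m(2)[rule_format, of "\<chi> i. f i"] vl by simp
    hence nf: "norm (\<chi> i. f i) \<le> 1 / m" using Nf m(1) by (simp add: field_simps)
    have "\<bar>\<Sum>x\<in>UNIV. f x * \<phi> x\<bar> \<le> norm (\<chi> i. f i) * norm (\<chi> i. \<phi> i)"
      unfolding inn by (rule Cauchy_Schwarz_ineq2)
    also have "\<dots> \<le> (1/m) * norm (\<chi> i. \<phi> i)" by (rule mult_right_mono[OF nf]) simp
    finally have s: "\<bar>\<Sum>x\<in>UNIV. f x * \<phi> x\<bar> \<le> B" unfolding B_def by simp
    have c: "real CARD('n) \<ge> 1" by simp
    have "ip f \<phi> \<le> \<bar>\<Sum>x\<in>UNIV. f x * \<phi> x\<bar> / real CARD('n)"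
      unfolding ip_def expect_def by (rule divide_right_mono) auto
    also have "\<dots> \<le> \<bar>\<Sum>x\<in>UNIV. f x * \<phi> x\<bar>"
      using divide_left_mono[OF c abs_ge_zero[of "\<Sum>x\<in>UNIV. f x * \<phi> x"]] by simp
    finally show "ip f \<phi> \<le> B" using s by simp
  qed
qed

lemma dual_ge: assumes "is_norm N" "N f \<le> 1" shows "ip f \<phi> \<le> dual_norm N \<phi>"
  unfolding dual_norm_def by (rule cSup_upper[OF _ bdd[OF assms(1)]]) (use assms(2) in blast)

lemma scale1: assumes "is_norm N" "N g > 0" shows "N (\<lambda>x. (1 / N g) * g x) = 1"
proof -
  have "N (\<lambda>x. (1 / N g) * g x) = \<bar>1 / N g\<bar> * N g" using assms unfolding is_norm_def by blast
  thus ?thesis using assms(2) by simp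
qed

lemma part1: assumes N: "is_norm N" and A: "is_algebra_norm (dual_norm N)"
  shows "\<bar>expect f\<bar> \<le> N f"
proof (cases "N f = 0")
  case True
  hence "f = (\<lambda>_. 0)" using N unfolding is_norm_def by blast
  thus ?thesis using True by (simp add: expect_def)
next
  case False
  hence pos: "N f > 0" using N unfolding is_norm_def by (metis order_le_less)
  have D1: "dual_norm N (\<lambda>_. 1) = 1" using A unfolding is_algebra_norm_def by blast
  have g1: "N (\<lambda>x. (1 / N f) * f x) = 1" by (rule scale1[OF N pos])
  have "N (\<lambda>x. (1 / N f) * (- f x)) = N (\<lambda>x. (1 / N f) * f x)"
    using norm_neg[OF N, of "\<lambda>x. (1 / N f) * f x"] by simp
  hence g2: "N (\<lambda>x. (1 / N f) * (- f x)) = 1" using g1 by simp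
  have e1: "ip (\<lambda>x. (1 / N f) * f x) (\<lambda>_. 1) = expect f / N f"
  proof -
    have "(\<Sum>x\<in>UNIV. (1 / N f) * f x * 1) = (1 / N f) * (\<Sum>x\<in>UNIV. f x)"
      by (simp add: sum_distrib_left)
    thus ?thesis unfolding ip_def expect_def by simp
  qed
  have e2: "ip (\<lambda>x. (1 / N f) * (- f x)) (\<lambda>_. 1) = - expect f / N f"
  proof -
    have "(\<Sum>x\<in>UNIV. (1 / N f) * (- f x) * 1) = - ((1 / N f) * (\<Sum>x\<in>UNIV. f x))"
      by (simp add: sum_distrib_left sum_negf)
    thus ?thesis unfolding ip_def expect_def by simp
  qed
  have "expect f / N f \<le> 1" using dual_ge[OF N, of "\<lambda>x. (1 / N f) * f x" "\<lambda>_. 1"] g1 e1 D1 by simp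
  moreover have "- expect f / N f \<le> 1" using dual_ge[OF N, of "\<lambda>x. (1 / N f) * (- f x)" "\<lambda>_. 1"] g2 e2 D1 by simp
  ultimately show ?thesis using pos by (simp add: field_simps abs_le_iff)
qed

lemma point_lower: fixes a :: "'a::finite" assumes N: "is_norm N"
  shows "\<exists>c>0. \<forall>\<psi>. c * \<bar>\<psi> a\<bar> \<le> dual_norm N \<psi>"
proof -
  have "delta a \<noteq> (\<lambda>_. 0)" unfolding delta_def by (metis one_neq_zero)
  hence pos: "N (delta a) > 0" using N unfolding is_norm_def by (metis order_le_less)
  define c where "c = 1 / (N (delta a) * real CARD('a))"
  have c0: "c > 0" unfolding c_def using pos by simp
  have g1: "N (\<lambda>x. (1 / N (delta a)) * delta a x) = 1" by (rule scale1[OF N pos])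
  have "N (\<lambda>x. (1 / N (delta a)) * (- delta a x)) = N (\<lambda>x. (1 / N (delta a)) * delta a x)"
    using norm_neg[OF N, of "\<lambda>x. (1 / N (delta a)) * delta a x"] by simp
  hence g2: "N (\<lambda>x. (1 / N (delta a)) * (- delta a x)) = 1" using g1 by simp
  show ?thesis
  proof (intro exI[of _ c] conjI allI c0)
    fix \<psi> :: "'a \<Rightarrow> real"
    have s1: "(\<Sum>x\<in>UNIV. (1 / N (delta a)) * delta a x * \<psi> x) = (\<Sum>x\<in>UNIV. if x = a then \<psi> a / N (delta a) else 0)"
      by (rule sum.cong) (auto simp: delta_def)
    have s2: "(\<Sum>x\<in>UNIV. (1 / N (delta a)) * (- delta a x) * \<psi> x) = (\<Sum>x\<in>UNIV. if x = a then - (\<psi> a / N (delta a)) else 0)"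
      by (rule sum.cong) (auto simp: delta_def)
    have e1: "ip (\<lambda>x. (1 / N (delta a)) * delta a x) \<psi> = c * \<psi> a"
      unfolding ip_def expect_def c_def using s1 by simp
    have e2: "ip (\<lambda>x. (1 / N (delta a)) * (- delta a x)) \<psi> = - (c * \<psi> a)"
      unfolding ip_def expect_def c_def using s2 by simp
    have "c * \<psi> a \<le> dual_norm N \<psi>" using dual_ge[OF N, of _ \<psi>] g1 e1 by (metis order_refl)
    moreover have "- (c * \<psi> a) \<le> dual_norm N \<psi>" using dual_ge[OF N, of _ \<psi>] g2 e2 by (metis order_refl)
    ultimately show "c * \<bar>\<psi> a\<bar> \<le> dual_norm N \<psi>" using c0 by (simp add: abs_if)
  qed
qed

lemma pow_le: assumes A: "is_algebra_norm (dual_norm N)"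
  shows "dual_norm N (\<lambda>x. \<phi> x ^ k) \<le> dual_norm N \<phi> ^ k"
proof (induction k)
  case 0 then show ?case using A unfolding is_algebra_norm_def by simp
next
  case (Suc k)
  have nn: "dual_norm N \<phi> \<ge> 0" using A unfolding is_algebra_norm_def is_norm_def by blast
  have "dual_norm N (\<lambda>x. \<phi> x ^ Suc k) = dual_norm N (\<lambda>x. \<phi> x * \<phi> x ^ k)" by simp
  also have "\<dots> \<le> dual_norm N \<phi> * dual_norm N (\<lambda>x. \<phi> x ^ k)"
  proof -
    have mul: "\<forall>f g. dual_norm N (\<lambda>x. f x * g x) \<le> dual_norm N f * dual_norm N g"
      using A unfolding is_algebra_norm_def by blast
    show ?thesis using mul[rule_format, of \<phi> "\<lambda>x. \<phi> x ^ k"] by simp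
  qed
  also have "\<dots> \<le> dual_norm N \<phi> * dual_norm N \<phi> ^ k" by (rule mult_left_mono[OF Suc nn])
  finally show ?case by simp
qed

lemma part2: fixes \<phi> :: "'n::finite \<Rightarrow> real"
  assumes N: "is_norm N" and A: "is_algebra_norm (dual_norm N)"
  shows "\<bar>\<phi> a\<bar> \<le> dual_norm N \<phi>"
proof (rule ccontr)
  assume "\<not> ?thesis"
  hence gt: "\<bar>\<phi> a\<bar> > dual_norm N \<phi>" by simp
  have nn: "dual_norm N \<phi> \<ge> 0" using A unfolding is_algebra_norm_def is_norm_def by blast
  obtain c where c: "c > 0" "\<forall>\<psi>. c * \<bar>\<psi> a\<bar> \<le> dual_norm N \<psi>" using point_lower[OF N] by blast
  show False
  proof (cases "dual_norm N \<phi> = 0")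
    case True
    have "c * \<bar>\<phi> a\<bar> \<le> 0" using c(2)[rule_format, of \<phi>] True by simp
    thus False using c(1) gt True by (simp add: mult_le_0_iff)
  next
    case False
    hence dp: "dual_norm N \<phi> > 0" using nn by simp
    define r where "r = \<bar>\<phi> a\<bar> / dual_norm N \<phi>"
    have r1: "r > 1" unfolding r_def using gt dp by simp
    obtain k where k: "1 / c < r ^ k" using real_arch_pow[OF r1] by blast
    have "c * \<bar>\<phi> a\<bar> ^ k \<le> dual_norm N \<phi> ^ k"
      using c(2)[rule_format, of "\<lambda>x. \<phi> x ^ k"] pow_le[OF A, of \<phi> k] by (simp add: power_abs)
    moreover have "\<bar>\<phi> a\<bar> ^ k = r ^ k * dual_norm N \<phi> ^ k" unfolding r_def using dp
      by (simp add: power_divide)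
    ultimately have "c * r ^ k \<le> 1" using dp by (simp add: mult.assoc[symmetric])
    moreover have "1 < c * r ^ k" using k c(1) by (simp add: field_simps)
    ultimately show False by simp
  qed
qed

theorem lemma4p2:
  fixes N :: "('n::finite \<Rightarrow> real) \<Rightarrow> real"
  assumes "is_norm N"
    and "is_algebra_norm (dual_norm N)"
  shows "\<forall>f. N f \<ge> \<bar>expect f\<bar> \<and> dual_norm N f \<ge> sup_norm f"
proof (intro allI conjI)
  fix f :: "'n \<Rightarrow> real"
  show "N f \<ge> \<bar>expect f\<bar>" by (rule part1[OF assms])
  show "dual_norm N f \<ge> sup_norm f" unfolding sup_norm_def
    using part2[OF assms] by (simp add: Max_le_iff)
qed

end
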